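(* Let $k\ge 3$, let $n$ be divisible by $3$, $\mathbf{X}\in\{0,1\}^{n/3\times n/3}$ and $\mu,\upsilon\in\{0,1\}^{n/3}$. Then the number of $k$-cliques in $\mathsf{G}_k^{\mu,\upsilon}(\mathbf{X})$ equals $K_3(G^{\mu,\upsilon}(\mathbf{X}))\cdot(n/3)^{k-3}$, where $K_3(\cdot)$ denotes the number of triangles.
   Context: $G^{\mu,\upsilon}(\mathbf{X})$ is the tripartite graph on vertex sets $U=\{u_1,\dots,u_{n/3}\}$, $Y=\{y_1,\dots,y_{n/3}\}$, $W=\{w_1,\dots,w_{n/3}\}$ whose edges are exactly: $\{u_i,y_j\}$ iff $\mathbf{X}_{i,j}=1$; $\{u_i,w_j\}$ for all $j$ iff $\mu_i=1$; $\{y_i,w_j\}$ for all $j$ iff $\upsilon_i=1$. $\mathsf{G}_k^{\mu,\upsilon}(\mathbf{X})$ has vertex set the disjoint union of $\mathsf{U}=\{\mathsf{u}_1,\dots,\mathsf{u}_{n/3}\}$, $\mathsf{Y}=\{\mathsf{y}_1,\dots,\mathsf{y}_{n/3}\}$ and $\mathsf{W}_p=\{\mathsf{w}_{p,1},\dots,\mathsf{w}_{p,n/3}\}$ for $1\le p\le k-2$, with edges exactly: $\{\mathsf{u}_i,\mathsf{y}_j\}$ iff $\mathbf{X}_{i,j}=1$; $\{\mathsf{u}_i,\mathsf{w}_{p,j}\}$ for all $p,j$ iff $\mu_i=1$; $\{\mathsf{y}_i,\mathsf{w}_{p,j}\}$ for all $p,j$ iff $\upsilon_i=1$; $\{\mathsf{w}_{p,i},\mathsf{w}_{q,j}\}$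 for all $i,j$ and $p\ne q$. A $k$-clique is a set of $k$ pairwise adjacent vertices. *)

theory Defs
  imports Main
begin

text \<open>Vertices are pairs (t, i) with a part tag t and an index i < m (0-based), m = n/3.
  Tripartite graph G: tag 0 = U, tag 1 = Y, tag 2 = W.
  Graph G_k: tag 0 = U, tag 1 = Y, tag p+1 = W_p for 1 \<le> p \<le> k-2 (tags 2..k-1).\<close>

definition G_V :: "nat \<Rightarrow> (nat \<times> nat) set" where
  "G_V m = {(t, i). t < 3 \<and> i < m}"

definition G_adj :: "(nat \<Rightarrow> nat \<Rightarrow> bool) \<Rightarrow> (nat \<Rightarrow> bool) \<Rightarrow> (nat \<Rightarrow> bool)
    \<Rightarrow> nat \<times> nat \<Rightarrow> nat \<times> nat \<Rightarrow> bool" where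
  "G_adj X mu ups a b \<longleftrightarrow>
     (fst a = 0 \<and> fst b = 1 \<and> X (snd a) (snd b)) \<or>
     (fst a = 1 \<and> fst b = 0 \<and> X (snd b) (snd a)) \<or>
     (fst a = 0 \<and> fst b = 2 \<and> mu (snd a)) \<or>
     (fst a = 2 \<and> fst b = 0 \<and> mu (snd b)) \<or>
     (fst a = 1 \<and> fst b = 2 \<and> ups (snd a)) \<or>
     (fst a = 2 \<and> fst b = 1 \<and> ups (snd b))"

definition Gk_V :: "nat \<Rightarrow> nat \<Rightarrow> (nat \<times> nat) set" where
  "Gk_V k m = {(t, i). t < k \<and> i < m}"

definition Gk_adj :: "(nat \<Rightarrow> nat \<Rightarrow> bool) \<Rightarrow> (nat \<Rightarrow> bool) \<Rightarrow> (nat \<Rightarrow> bool)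
    \<Rightarrow> nat \<times> nat \<Rightarrow> nat \<times> nat \<Rightarrow> bool" where
  "Gk_adj X mu ups a b \<longleftrightarrow>
     (fst a = 0 \<and> fst b = 1 \<and> X (snd a) (snd b)) \<or>
     (fst a = 1 \<and> fst b = 0 \<and> X (snd b) (snd a)) \<or>
     (fst a = 0 \<and> fst b \<ge> 2 \<and> mu (snd a)) \<or>
     (fst a \<ge> 2 \<and> fst b = 0 \<and> mu (snd b)) \<or>
     (fst a = 1 \<and> fst b \<ge> 2 \<and> ups (snd a)) \<or>
     (fst a \<ge> 2 \<and> fst b = 1 \<and> ups (snd b)) \<or>
     (fst a \<ge> 2 \<and> fst b \<ge> 2 \<and> fst a \<noteq> fst b)"

definition is_clique :: "('a \<Rightarrow> 'a \<Rightarrow> bool) \<Rightarrow> 'a set \<Rightarrow> 'a set \<Rightarrow> bool" where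
  "is_clique E V S \<longleftrightarrow> S \<subseteq> V \<and> (\<forall>x\<in>S. \<forall>y\<in>S. x \<noteq> y \<longrightarrow> E x y)"

definition num_cliques :: "('a \<Rightarrow> 'a \<Rightarrow> bool) \<Rightarrow> 'a set \<Rightarrow> nat \<Rightarrow> nat" where
  "num_cliques E V k = card {S. is_clique E V S \<and> card S = k}"

end

theory Submission
  imports Defs "HOL-Library.FuncSet"
begin

lemma adj_tags: "Gk_adj X mu ups a b \<Longrightarrow> fst a \<noteq> fst b"
  unfolding Gk_adj_def by auto

definition FF :: "nat \<Rightarrow> (nat \<times> nat) \<times> (nat \<Rightarrow> nat) \<Rightarrow> (nat \<times> nat) set" where
  "FF k x = insert (0, fst (fst x)) (insert (1, snd (fst x)) ((\<lambda>t. (t, snd x t)) ` {2..<k}))"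

lemma FF_inj: "inj_on (FF k) (P \<times> PiE {2..<k} (\<lambda>_. B))"
proof (rule inj_onI)
  fix x y assume x: "x \<in> P \<times> PiE {2..<k} (\<lambda>_. B)" and y: "y \<in> P \<times> PiE {2..<k} (\<lambda>_. B)"
    and e: "FF k x = FF k y"
  obtain i j g where xx: "x = ((i,j),g)" by (metis prod.collapse)
  obtain i' j' g' where yy: "y = ((i',j'),g')" by (metis prod.collapse)
  have e2: "FF k ((i,j),g) = FF k ((i',j'),g')" using e xx yy by simp
  have "(0,i) \<in> FF k ((i,j),g)" by (simp add: FF_def)
  hence "(0,i) \<in> FF k ((i',j'),g')" using e2 by simp
  hence 1: "i = i'" by (auto simp: FF_def image_iff)
  have "(1,j) \<in> FF k ((i,j),g)" by (simp add: FF_def)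
  hence "(1,j) \<in> FF k ((i',j'),g')" using e2 by simp
  hence 2: "j = j'" by (auto simp: FF_def image_iff)
  have 3: "g t = g' t" for t
  proof (cases "t \<in> {2..<k}")
    case True
    hence "(t, g t) \<in> FF k ((i,j),g)" by (simp add: FF_def)
    hence "(t, g t) \<in> FF k ((i',j'),g')" using e2 by simp
    thus ?thesis using True by (auto simp: FF_def image_iff)
  next
    case False
    thus ?thesis using x y xx yy by (auto simp: PiE_def extensional_def)
  qed
  show "x = y" using 1 2 3 xx yy by auto
qed

lemma cliques_eq:
  assumes k: "k \<ge> 3"
  shows "{S. is_clique (Gk_adj X mu ups) (Gk_V k m) S \<and> card S = k}
    = FF k ` ({(i,j). i < m \<and> j < m \<and> X i j \<and> mu i \<and> ups j} \<times> PiE {2..<k} (\<lambda>_. {..<m}))"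
    (is "?L = FF k ` (?P \<times> ?Q)")
proof
  show "?L \<subseteq> FF k ` (?P \<times> ?Q)"
  proof
    fix S assume "S \<in> ?L"
    hence cl: "S \<subseteq> Gk_V k m" "\<And>x y. x \<in> S \<Longrightarrow> y \<in> S \<Longrightarrow> x \<noteq> y \<Longrightarrow> Gk_adj X mu ups x y"
      and cS: "card S = k" by (auto simp: is_clique_def)
    have inj: "inj_on fst S" using cl(2) adj_tags by (metis inj_onI)
    have sub: "fst ` S \<subseteq> {..<k}" using cl(1) by (auto simp: Gk_V_def)
    have fin: "finite S" using cS k by (metis card.infinite not_numeral_le_zero)
    have "card (fst ` S) = k" using card_image[OF inj] cS by simp
    hence im: "fst ` S = {..<k}" using sub by (simp add: card_subset_eq)
    define h where "h t = snd (SOME x. x \<in> S \<and> fst x = t)" for t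
    have hS: "(t, h t) \<in> S" if "t < k" for t
    proof -
      have "t \<in> fst ` S" using im that by simp
      hence "\<exists>x. x \<in> S \<and> fst x = t" by auto
      hence "(SOME x. x \<in> S \<and> fst x = t) \<in> S \<and> fst (SOME x. x \<in> S \<and> fst x = t) = t"
        by (rule someI_ex)
      thus ?thesis unfolding h_def by (metis prod.collapse)
    qed
    have Seq: "S = (\<lambda>t. (t, h t)) ` {..<k}"
    proof
      show "(\<lambda>t. (t, h t)) ` {..<k} \<subseteq> S" using hS by auto
      show "S \<subseteq> (\<lambda>t. (t, h t)) ` {..<k}"
      proof
        fix x assume xS: "x \<in> S"
        hence "fst x < k" using sub by auto
        hence "(fst x, h (fst x)) \<in> S" using hS by auto
        hence "x = (fst x, h (fst x))" using inj xS by (metis fst_conv inj_on_def)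
        thus "x \<in> (\<lambda>t. (t, h t)) ` {..<k}" using \<open>fst x < k\<close> by blast
      qed
    qed
    have hm: "h t < m" if "t < k" for t using hS[OF that] cl(1) by (auto simp: Gk_V_def)
    have a01: "Gk_adj X mu ups (0, h 0) (1, h 1)" using k by (intro cl(2) hS) auto
    have a02: "Gk_adj X mu ups (0, h 0) (2, h 2)" using k by (intro cl(2) hS) auto
    have a12: "Gk_adj X mu ups (1, h 1) (2, h 2)" using k by (intro cl(2) hS) auto
    have "X (h 0) (h 1)" "mu (h 0)" "ups (h 1)" using a01 a02 a12 by (simp_all add: Gk_adj_def)
    moreover have "h 0 < m" "h 1 < m" using hm k by auto
    ultimately have P: "(h 0, h 1) \<in> ?P" by simp
    have Q: "restrict h {2..<k} \<in> ?Q" using hm by auto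
    have "{..<k} = {0,1} \<union> {2..<k}" using k by auto
    hence "S = FF k ((h 0, h 1), restrict h {2..<k})"
      unfolding Seq FF_def by (auto simp: image_Un)
    thus "S \<in> FF k ` (?P \<times> ?Q)" using P Q by blast
  qed
  show "FF k ` (?P \<times> ?Q) \<subseteq> ?L"
  proof
    fix S assume "S \<in> FF k ` (?P \<times> ?Q)"
    then obtain i j g where ij: "(i,j) \<in> ?P" and g: "g \<in> ?Q" and S: "S = FF k ((i,j),g)" by auto
    have mem: "x \<in> S \<longleftrightarrow> x = (0,i) \<or> x = (1,j) \<or> (2 \<le> fst x \<and> fst x < k \<and> snd x = g (fst x))" for x
      unfolding S FF_def by (cases x) auto
    have sub: "S \<subseteq> Gk_V k m"
    proof
      fix x assume "x \<in> S"
      thus "x \<in> Gk_V k m" using ij g k unfolding mem Gk_V_def by (cases x) (auto simp: PiE_def Pi_def)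
    qed
    have adj: "\<forall>x\<in>S. \<forall>y\<in>S. x \<noteq> y \<longrightarrow> Gk_adj X mu ups x y"
    proof (intro ballI impI)
      fix x y assume x: "x \<in> S" and y: "y \<in> S" and ne: "x \<noteq> y"
      obtain a b where xab: "x = (a,b)" by (cases x)
      obtain c d where ycd: "y = (c,d)" by (cases y)
      have X: "X i j" "mu i" "ups j" using ij by auto
      from x y ne X show "Gk_adj X mu ups x y"
        unfolding mem xab ycd by (elim disjE) (auto simp: Gk_adj_def)
    qed
    have "card S = 2 + card ((\<lambda>t. (t, g t)) ` {2..<k})"
      unfolding S FF_def by (auto simp: card_insert_if)
    also have "\<dots> = k" using k by (subst card_image) (auto simp: inj_on_def)
    finally show "S \<in> ?L" using sub adj by (simp add: is_clique_def)
  qed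
qed

lemma count_k:
  assumes k: "k \<ge> 3"
  shows "num_cliques (Gk_adj X mu ups) (Gk_V k m) k
    = card {(i,j). i < m \<and> j < m \<and> X i j \<and> mu i \<and> ups j} * m ^ (k - 2)"
proof -
  have fP: "finite {(i,j). i < m \<and> j < m \<and> X i j \<and> mu i \<and> ups j}"
    by (rule finite_subset[of _ "{..<m} \<times> {..<m}"]) auto
  show ?thesis
    unfolding num_cliques_def cliques_eq[OF k]
    by (simp add: card_image[OF FF_inj] card_cartesian_product card_PiE)
qed

lemma G_eq: "num_cliques (G_adj X mu ups) (G_V m) 3 = num_cliques (Gk_adj X mu ups) (Gk_V 3 m) 3"
proof -
  have V: "G_V m = Gk_V 3 m" by (simp add: G_V_def Gk_V_def)
  have a: "G_adj X mu ups a b = Gk_adj X mu ups a b" if "fst a < 3" "fst b < 3" for a b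
  proof -
    have e: "(2 \<le> fst a) = (fst a = 2)" "(2 \<le> fst b) = (fst b = 2)" using that by auto
    show ?thesis unfolding G_adj_def Gk_adj_def e by auto
  qed
  have "is_clique (G_adj X mu ups) (G_V m) S = is_clique (Gk_adj X mu ups) (Gk_V 3 m) S" for S
  proof
    assume "is_clique (G_adj X mu ups) (G_V m) S"
    thus "is_clique (Gk_adj X mu ups) (Gk_V 3 m) S"
      unfolding is_clique_def V using a by (metis (no_types, lifting) Gk_V_def case_prod_beta mem_Collect_eq subsetD)
  next
    assume "is_clique (Gk_adj X mu ups) (Gk_V 3 m) S"
    thus "is_clique (G_adj X mu ups) (G_V m) S"
      unfolding is_clique_def V using a by (metis (no_types, lifting) Gk_V_def case_prod_beta mem_Collect_eq subsetD)
  qed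
  thus ?thesis unfolding num_cliques_def by simp
qed

theorem lemma5:
  fixes k n :: nat and X :: "nat \<Rightarrow> nat \<Rightarrow> bool" and mu ups :: "nat \<Rightarrow> bool"
  assumes "k \<ge> 3" and "3 dvd n"
  shows "num_cliques (Gk_adj X mu ups) (Gk_V k (n div 3)) k
         = num_cliques (G_adj X mu ups) (G_V (n div 3)) 3 * (n div 3) ^ (k - 3)"
proof -
  have "k - 2 = Suc (k - 3)" using assms(1) by simp
  moreover have "num_cliques (Gk_adj X mu ups) (Gk_V 3 (n div 3)) 3
    = card {(i,j). i < n div 3 \<and> j < n div 3 \<and> X i j \<and> mu i \<and> ups j} * (n div 3) ^ 1"
    using count_k[of 3] by simp
  ultimately show ?thesis unfolding G_eq count_k[OF assms(1)] by simp
qed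

end
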